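(* Let $X$ be a nonnegative real-valued random variable and $\Lambda(\lambda)=\log\mathbb E[e^{\lambda X}]$, with Fenchel–Legendre transform $\Lambda^\star(x)=\sup_{\lambda\in\mathbb R}(\lambda x-\Lambda(\lambda))$. Then $$\lim_{\nu\downarrow0}\nu\Lambda^\star(1/\nu)=\sup\{\lambda:\Lambda(\lambda)<\infty\}.$$ *)

theory Defs
  imports "HOL-Probability.Probability"
begin

definition log_mgf :: "'a measure \<Rightarrow> ('a \<Rightarrow> real) \<Rightarrow> real \<Rightarrow> ereal" where
  "log_mgf M X l =
     (let E = (\<integral>\<^sup>+ \<omega>. ennreal (exp (l * X \<omega>)) \<partial>M)
      in if E = \<infinity> then \<infinity> else ereal (ln (enn2real E)))"

definition fl_transform :: "(real \<Rightarrow> ereal) \<Rightarrow> real \<Rightarrow> ereal" where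
  "fl_transform L x = (SUP l\<in>UNIV. ereal (l * x) - L l)"

end

theory Submission
  imports Defs
begin

lemma lmgf_ninf: "log_mgf M X l \<noteq> -\<infinity>"
  unfolding log_mgf_def Let_def by auto

lemma lmgf_ge0:
  assumes "prob_space M" "X \<in> borel_measurable M" "\<forall>\<omega>\<in>space M. X \<omega> \<ge> 0" "l \<ge> 0"
  shows "log_mgf M X l \<ge> 0"
proof -
  interpret prob_space M by fact
  let ?E = "\<integral>\<^sup>+ \<omega>. ennreal (exp (l * X \<omega>)) \<partial>M"
  have "(\<integral>\<^sup>+ \<omega>. 1 \<partial>M) \<le> ?E"
    by (rule nn_integral_mono) (use assms in auto)
  hence E1: "1 \<le> ?E" by (simp add: emeasure_space_1)
  show ?thesis
  proof (cases "?E = \<infinity>")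
    case True thus ?thesis unfolding log_mgf_def Let_def by simp
  next
    case False
    have "1 \<le> enn2real ?E" using E1 False
      using enn2real_mono[of 1 ?E] by (simp add: less_top)
    thus ?thesis unfolding log_mgf_def Let_def using False by simp
  qed
qed

lemma lmgf_neg:
  assumes "prob_space M" "X \<in> borel_measurable M" "\<forall>\<omega>\<in>space M. X \<omega> \<ge> 0" "l < 0"
    and p: "measure M {\<omega>\<in>space M. X \<omega> \<le> c} > 0"
  shows "log_mgf M X l \<ge> ereal (l*c + ln (measure M {\<omega>\<in>space M. X \<omega> \<le> c}))"
proof -
  interpret prob_space M by fact
  let ?S = "{\<omega>\<in>space M. X \<omega> \<le> c}"
  let ?p = "measure M ?S"
  let ?E = "\<integral>\<^sup>+ \<omega>. ennreal (exp (l * X \<omega>)) \<partial>M"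
  have Sm: "?S \<in> sets M" using assms(2) by measurable
  have "(\<integral>\<^sup>+ \<omega>. ennreal (exp (l*c)) * indicator ?S \<omega> \<partial>M) \<le> ?E"
  proof (rule nn_integral_mono)
    fix \<omega> assume "\<omega> \<in> space M"
    show "ennreal (exp (l*c)) * indicator ?S \<omega> \<le> ennreal (exp (l * X \<omega>))"
      using assms(4) by (auto simp: indicator_def mult_left_mono_neg)
  qed
  also have "(\<integral>\<^sup>+ \<omega>. ennreal (exp (l*c)) * indicator ?S \<omega> \<partial>M) = ennreal (exp (l*c) * ?p)"
    using Sm by (simp add: nn_integral_cmult_indicator emeasure_eq_measure ennreal_mult)
  finally have lo: "ennreal (exp (l*c) * ?p) \<le> ?E" .
  have "?E \<le> (\<integral>\<^sup>+ \<omega>. 1 \<partial>M)"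
    by (rule nn_integral_mono) (use assms in \<open>auto simp: mult_nonpos_nonneg\<close>)
  hence fin: "?E \<noteq> \<infinity>" by (auto simp: emeasure_space_1 top_unique)
  have "exp (l*c) * ?p \<le> enn2real ?E"
  proof -
    have "enn2real (ennreal (exp (l*c) * ?p)) \<le> enn2real ?E"
      using lo fin by (intro enn2real_mono) (auto simp: less_top)
    thus ?thesis by simp
  qed
  hence "ln (exp (l*c) * ?p) \<le> ln (enn2real ?E)"
    using p by (intro ln_mono) auto
  hence "l*c + ln ?p \<le> ln (enn2real ?E)" using p by (simp add: ln_mult)
  thus ?thesis unfolding log_mgf_def Let_def using fin by simp
qed

lemma exists_c:
  fixes X :: "'a \<Rightarrow> real"
  assumes "prob_space M" "X \<in> borel_measurable M"
  shows "\<exists>c::nat. measure M {\<omega>\<in>space M. X \<omega> \<le> real c} > 0"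
proof (rule ccontr)
  interpret prob_space M by fact
  assume "\<not> ?thesis"
  hence "\<And>c::nat. measure M {\<omega>\<in>space M. X \<omega> \<le> c} = 0"
    by (metis measure_nonneg order_less_le)
  hence z: "\<And>c::nat. emeasure M {\<omega>\<in>space M. X \<omega> \<le> c} = 0"
    by (simp add: emeasure_eq_measure)
  have r: "range (\<lambda>c::nat. {\<omega>\<in>space M. X \<omega> \<le> c}) \<subseteq> sets M"
    using assms(2) by auto
  have "emeasure M (\<Union>c::nat. {\<omega>\<in>space M. X \<omega> \<le> c}) = 0"
    by (rule emeasure_UN_eq_0[OF z r])
  moreover have "(\<Union>c::nat. {\<omega>\<in>space M. X \<omega> \<le> c}) = space M"
  proof (intro equalityI subsetI)
    fix \<omega> assume "\<omega> \<in> space M"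
    moreover have "X \<omega> \<le> real (nat \<lceil>X \<omega>\<rceil>)" by (rule real_nat_ceiling_ge)
    ultimately show "\<omega> \<in> (\<Union>c::nat. {\<omega>\<in>space M. X \<omega> \<le> c})" by blast
  qed auto
  ultimately show False by (simp add: emeasure_space_1)
qed


theorem proposition2p5:
  fixes M :: "'a measure" and X :: "'a \<Rightarrow> real"
  assumes "prob_space M"
    and "X \<in> borel_measurable M"
    and "\<forall>\<omega>\<in>space M. X \<omega> \<ge> 0"
  shows "((\<lambda>\<nu>::real. ereal \<nu> * fl_transform (log_mgf M X) (1 / \<nu>))
            \<longlongrightarrow> (SUP l\<in>{l. log_mgf M X l < \<infinity>}. ereal l)) (at_right 0)"
proof -
  interpret prob_space M by fact
  define L where "L = log_mgf M X"
  define S where "S = (SUP l\<in>{l. L l < \<infinity>}. ereal l)"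
  have Lfin: "\<exists>r. L l = ereal r" if "L l < \<infinity>" for l
    using lmgf_ninf[of M X l] that unfolding L_def by (cases "log_mgf M X l") auto
  have L0: "L 0 = 0"
    unfolding L_def log_mgf_def Let_def by (simp add: emeasure_space_1)
  have S0: "0 \<le> S" unfolding S_def
    by (rule SUP_upper2[of 0]) (auto simp: L0)
  have pos: "eventually (\<lambda>\<nu>::real. 0 < \<nu>) (at_right 0)"
    unfolding eventually_at_right_field by (intro exI[of _ 1]) auto
  have "((\<lambda>\<nu>. ereal \<nu> * fl_transform L (1 / \<nu>)) \<longlongrightarrow> S) (at_right 0)"
  proof (rule order_tendstoI)
    fix a assume "a < S"
    then obtain l where l: "L l < \<infinity>" "a < ereal l" unfolding S_def less_SUP_iff by auto
    obtain r where r: "L l = ereal r" using Lfin[OF l(1)] by auto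
    have "((\<lambda>\<nu>::real. l - \<nu>*r) \<longlongrightarrow> l - 0*r) (at_right 0)"
      by (intro tendsto_intros)
    hence "((\<lambda>\<nu>::real. ereal (l - \<nu>*r)) \<longlongrightarrow> ereal l) (at_right 0)" by simp
    hence ev1: "eventually (\<lambda>\<nu>. a < ereal (l - \<nu>*r)) (at_right 0)"
      using order_tendstoD(1) l(2) by blast
    show "eventually (\<lambda>\<nu>. a < ereal \<nu> * fl_transform L (1 / \<nu>)) (at_right 0)"
      using ev1 pos
    proof (eventually_elim)
      case (elim \<nu>)
      have "ereal (l*(1/\<nu>)) - L l \<le> fl_transform L (1/\<nu>)"
        unfolding fl_transform_def by (rule SUP_upper) simp
      hence "ereal \<nu> * (ereal (l*(1/\<nu>)) - L l) \<le> ereal \<nu> * fl_transform L (1/\<nu>)"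
        by (rule ereal_mult_left_mono) (use elim in simp)
      moreover have "ereal \<nu> * (ereal (l*(1/\<nu>)) - L l) = ereal (l - \<nu>*r)"
        using elim(2) by (simp add: r field_simps)
      ultimately show ?case using elim(1) by simp
    qed
  next
    fix a assume "S < a"
    then obtain b0 where b0: "S < ereal b0" "ereal b0 < a" using ereal_dense2 by blast
    have b0pos: "0 < b0"
    proof -
      have "(0::ereal) < ereal b0" using S0 b0(1) by (rule le_less_trans)
      thus ?thesis by simp
    qed
    obtain c :: nat where cp: "measure M {\<omega>\<in>space M. X \<omega> \<le> c} > 0"
      using exists_c[OF assms(1,2)] by blast
    define p where "p = measure M {\<omega>\<in>space M. X \<omega> \<le> c}"
    have p0: "0 < p" using cp p_def by simp
    have p1: "p \<le> 1" unfolding p_def by simp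
    have lnp: "ln p \<le> 0" using p0 p1 by simp
    define B where "B = min (1 / (real c + 1)) (b0 / (1 - ln p))"
    have Bpos: "0 < B" unfolding B_def using b0pos lnp by simp
    have ev: "eventually (\<lambda>\<nu>::real. 0 < \<nu> \<and> \<nu> < B) (at_right 0)"
      unfolding eventually_at_right_field using Bpos by blast
    show "eventually (\<lambda>\<nu>. ereal \<nu> * fl_transform L (1 / \<nu>) < a) (at_right 0)"
      using ev
    proof (eventually_elim)
      case (elim \<nu>)
      hence \<nu>0: "0 < \<nu>" and \<nu>1: "\<nu> < 1 / (real c + 1)" and \<nu>2: "\<nu> < b0 / (1 - ln p)"
        unfolding B_def by auto
      have inv: "real c < 1 / \<nu>"
      proof -
        have "\<nu> * (real c + 1) < 1" using \<nu>1 by (simp add: field_simps)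
        thus ?thesis using \<nu>0 by (simp add: field_simps)
      qed
      have lp: "- ln p < b0 / \<nu>"
      proof -
        have "\<nu> * (1 - ln p) < b0" using \<nu>2 lnp by (simp add: field_simps)
        hence "\<nu> * (- ln p) < b0" using \<nu>0 by (simp add: algebra_simps)
        thus ?thesis using \<nu>0 by (simp add: field_simps)
      qed
      have "fl_transform L (1/\<nu>) \<le> ereal (b0/\<nu>)"
        unfolding fl_transform_def
      proof (rule SUP_least)
        fix l :: real
        show "ereal (l * (1/\<nu>)) - L l \<le> ereal (b0/\<nu>)"
        proof (cases "L l < \<infinity>")
          case False thus ?thesis by (simp add: top.not_eq_extremum)
        next
          case True
          obtain r where r: "L l = ereal r" using Lfin[OF True] by auto
          show ?thesis
          proof (cases "l \<ge> 0")
            case True2: True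
            have "0 \<le> r" using lmgf_ge0[OF assms True2] r unfolding L_def by simp
            moreover have "ereal l \<le> S" unfolding S_def using True by (intro SUP_upper) auto
            hence "ereal l < ereal b0" using b0(1) by (rule le_less_trans)
            hence "l \<le> b0" by simp
            hence "l / \<nu> \<le> b0 / \<nu>" using \<nu>0 by (simp add: divide_right_mono)
            ultimately show ?thesis using r by simp
          next
            case False2: False
            have "ereal (l*c + ln p) \<le> L l"
              using lmgf_neg[OF assms, of l c] False2 p0 unfolding L_def p_def by simp
            hence rl: "l*c + ln p \<le> r" using r by simp
            have "l * (1/\<nu> - c) \<le> 0" using False2 inv by (intro mult_nonpos_nonneg) auto
            hence "l * (1/\<nu>) - r \<le> - ln p" using rl by (simp add: algebra_simps)
            hence "l * (1/\<nu>) - r \<le> b0 / \<nu>" using lp by simp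
            thus ?thesis using r by simp
          qed
        qed
      qed
      hence "ereal \<nu> * fl_transform L (1/\<nu>) \<le> ereal \<nu> * ereal (b0/\<nu>)"
        by (rule ereal_mult_left_mono) (use \<nu>0 in simp)
      also have "\<dots> = ereal b0" using \<nu>0 by simp
      finally show ?case using b0(2) by simp
    qed
  qed
  thus ?thesis unfolding L_def S_def .
qed

end
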